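(* Let $n,m\in\mathbb{N}$, $f\in C[0,1]$, and let $\overline{B}_{n,m}$ be the composite Bernstein operator defined in the context. Then for every $k\in\{1,\dots,m\}$ and every $x\in\left[\frac{k-1}{m},\frac{k}{m}\right]$, $$ |\overline{B}_{n,m}(f;x)-f(x)|\le \frac32\,\omega_2\left(f;\sqrt{\frac{\left(x-\frac{k-1}{m}\right)\left(\frac{k}{m}-x\right)}{n}}\right). $$
   Context: For $a<b$, $f:[a,b]\to\mathbb{R}$ and $n\in\mathbb{N}$, the Bernstein polynomial on $[a,b]$ is $B_n^{[a,b]}(f;x)=\frac{1}{(b-a)^n}\sum_{i=0}^n\binom{n}{i}(x-a)^i(b-x)^{n-i}f\left(a+i\frac{b-a}{n}\right)$. For $m\in\mathbb{N}$ and $1\le k\le m$ put $B_{n,k}(f;x):=B_n^{[\frac{k-1}{m},\frac{k}{m}]}(f;x)$, and define $\overline{B}_{n,m}(f;x):=B_{n,k}(f;x)$ if $x\in\left[\frac{k-1}{m},\frac{k}{m}\right]$ (well defined at the break points, where both pieces equal $f(k/m)$). The second-order modulus of continuity on $[0,1]$ is $\omega_2(f,\delta)=\sup\{|f(x-h)-2f(x)+f(x+h)|: x\pm h\in[0,1],\ |h|\le\delta\}$ for $\delta\ge0$. *)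

theory Defs
  imports "HOL-Analysis.Analysis"
begin

definition bernstein_ab :: "nat \<Rightarrow> real \<Rightarrow> real \<Rightarrow> (real \<Rightarrow> real) \<Rightarrow> real \<Rightarrow> real" where
  "bernstein_ab n a b f x =
     (1 / (b - a) ^ n) * (\<Sum>i=0..n. real (n choose i) * (x - a) ^ i * (b - x) ^ (n - i)
                                      * f (a + real i * (b - a) / real n))"

definition bernstein_piece :: "nat \<Rightarrow> nat \<Rightarrow> nat \<Rightarrow> (real \<Rightarrow> real) \<Rightarrow> real \<Rightarrow> real" where
  "bernstein_piece n m k f x = bernstein_ab n ((real k - 1) / real m) (real k / real m) f x"

text \<open>Composite operator: on [(k-1)/m, k/m] use piece k. We take the least admissible
  k, namely k = max 1 (ceiling (m x)); at break points both pieces agree.\<close>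
definition bernstein_comp :: "nat \<Rightarrow> nat \<Rightarrow> (real \<Rightarrow> real) \<Rightarrow> real \<Rightarrow> real" where
  "bernstein_comp n m f x = bernstein_piece n m (max 1 (nat \<lceil>real m * x\<rceil>)) f x"

definition omega2 :: "(real \<Rightarrow> real) \<Rightarrow> real \<Rightarrow> real" where
  "omega2 f \<delta> = Sup {\<bar>f (x - h) - 2 * f x + f (x + h)\<bar> | x h.
      x - h \<in> {0..1} \<and> x + h \<in> {0..1} \<and> \<bar>h\<bar> \<le> \<delta>}"

end

theory Submission imports Defs begin

lemma chord:
  fixes g :: "real \<Rightarrow> real"
  assumes cont: "continuous_on {0..1} g" and a0: "0 \<le> \<alpha>" and ax: "\<alpha> < x" and xb: "x < \<beta>" and b1: "\<beta> \<le> 1"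
    and hpos: "h > 0" and w0: "\<omega> \<ge> 0"
    and hyp: "\<And>z s. 0 \<le> z - s \<Longrightarrow> z + s \<le> 1 \<Longrightarrow> 0 \<le> s \<Longrightarrow> s \<le> h \<Longrightarrow> g (z - s) - 2 * g z + g (z + s) \<le> \<omega>"
  shows "(\<beta> - x) * g \<alpha> + (x - \<alpha>) * g \<beta> - (\<beta> - \<alpha>) * g x \<le> (\<beta> - \<alpha>) * (\<omega> * (1 + (x - \<alpha>) * (\<beta> - x) / (2 * h^2)))"
proof -
  define E where "E y = ((\<beta> - y) * g \<alpha> + (y - \<alpha>) * g \<beta>) / (\<beta> - \<alpha>) - g y" for y
  have key: "E x \<le> \<omega>' * (1 + (x - \<alpha>) * (\<beta> - x) / (2 * h^2))" if w': "\<omega>' > \<omega>" for \<omega>'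
  proof -
    define W where "W y = \<omega>' * (1 + (y - \<alpha>) * (\<beta> - y) / (2 * h^2))" for y
    have sub: "{\<alpha>..\<beta>} \<subseteq> {0..1}" using a0 b1 by auto
    have "continuous_on {\<alpha>..\<beta>} (\<lambda>y. E y - W y)"
      unfolding E_def W_def
      by (intro continuous_intros continuous_on_subset[OF cont sub]) (use ax xb hpos in auto)
    then obtain y0 where y0: "y0 \<in> {\<alpha>..\<beta>}" and mx: "\<And>y. y \<in> {\<alpha>..\<beta>} \<Longrightarrow> E y - W y \<le> E y0 - W y0"
      using continuous_attains_sup[of "{\<alpha>..\<beta>}" "\<lambda>y. E y - W y"] ax xb by auto
    show ?thesis
    proof (rule ccontr)
      assume "\<not> ?thesis"
      then have "E x > W x" unfolding W_def by simp
      moreover have "E x - W x \<le> E y0 - W y0" using mx ax xb by auto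
      ultimately have M: "E y0 - W y0 > 0" by simp
      have Ea: "E \<alpha> = 0" and Eb: "E \<beta> = 0" unfolding E_def using ax xb by (auto simp: field_simps)
      have Wa: "W \<alpha> = \<omega>'" and Wb: "W \<beta> = \<omega>'" unfolding W_def by auto
      have "y0 \<noteq> \<alpha>" using M Ea Wa w' w0 by auto
      moreover have "y0 \<noteq> \<beta>" using M Eb Wb w' w0 by auto
      ultimately have y0i: "\<alpha> < y0" "y0 < \<beta>" using y0 by auto
      define s where "s = min h (min (y0 - \<alpha>) (\<beta> - y0))"
      have s0: "s > 0" using hpos y0i by (simp add: s_def)
      have sh: "s \<le> h" "s \<le> y0 - \<alpha>" "s \<le> \<beta> - y0" by (auto simp: s_def)
      have d: "g (y0 - s) - 2 * g y0 + g (y0 + s) \<le> \<omega>"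
        using hyp[of y0 s] sh s0 a0 b1 by auto
      have dE: "E (y0 + s) + E (y0 - s) - 2 * E y0 = - (g (y0 - s) - 2 * g y0 + g (y0 + s))"
      proof -
        define A where "A = (\<beta> - (y0 + s)) * g \<alpha> + (y0 + s - \<alpha>) * g \<beta>"
        define B where "B = (\<beta> - (y0 - s)) * g \<alpha> + (y0 - s - \<alpha>) * g \<beta>"
        define C where "C = (\<beta> - y0) * g \<alpha> + (y0 - \<alpha>) * g \<beta>"
        have "A + B = 2 * C" unfolding A_def B_def C_def by (simp add: algebra_simps)
        then have "A / (\<beta> - \<alpha>) + B / (\<beta> - \<alpha>) = 2 * (C / (\<beta> - \<alpha>))"
          by (metis add_divide_distrib times_divide_eq_right)
        moreover have "E (y0 + s) = A / (\<beta> - \<alpha>) - g (y0 + s)" unfolding E_def A_def by simp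
        moreover have "E (y0 - s) = B / (\<beta> - \<alpha>) - g (y0 - s)" unfolding E_def B_def by simp
        moreover have "E y0 = C / (\<beta> - \<alpha>) - g y0" unfolding E_def C_def by simp
        ultimately show ?thesis by linarith
      qed
      have dW: "W (y0 + s) + W (y0 - s) - 2 * W y0 = - (\<omega>' * s^2 / h^2)"
        unfolding W_def using hpos by (simp add: field_simps power2_eq_square)
      have p1: "E (y0 + s) - W (y0 + s) \<le> E y0 - W y0" using mx sh s0 by auto
      have p2: "E (y0 - s) - W (y0 - s) \<le> E y0 - W y0" using mx sh s0 by auto
      have nn: "\<omega>' * s^2 / h^2 \<ge> 0" using w' w0 by auto
      consider "s = h" | "s = y0 - \<alpha>" | "s = \<beta> - y0" unfolding s_def by linarith
      then show False
      proof cases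
        case 1
        then have "\<omega>' * s^2 / h^2 = \<omega>'" using hpos by simp
        then show False using dE dW p1 p2 d w' by linarith
      next
        case 2
        then have "y0 - s = \<alpha>" by simp
        then show False using dE dW p1 Ea Wa d w' M nn by auto
      next
        case 3
        then have "y0 + s = \<beta>" by simp
        then show False using dE dW p2 Eb Wb d w' M nn by auto
      qed
    qed
  qed
  define q where "q = (x - \<alpha>) * (\<beta> - x) / (2 * h^2)"
  have q0: "q \<ge> 0" unfolding q_def using ax xb by auto
  have Ex: "E x \<le> \<omega> * (1 + q)"
  proof (rule ccontr)
    assume "\<not> ?thesis"
    then have lt: "\<omega> * (1 + q) < E x" by simp
    define w where "w = (\<omega> + E x / (1 + q)) / 2"
    have "\<omega> < E x / (1 + q)" using lt q0 by (simp add: field_simps)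
    then have "w > \<omega>" unfolding w_def by simp
    from key[OF this] have "E x \<le> w * (1 + q)" unfolding q_def .
    also have "\<dots> = (\<omega> * (1 + q) + E x) / 2" unfolding w_def using q0 by (simp add: field_simps)
    finally show False using lt by simp
  qed
  have "(\<beta> - x) * g \<alpha> + (x - \<alpha>) * g \<beta> - (\<beta> - \<alpha>) * g x = (\<beta> - \<alpha>) * E x"
    unfolding E_def using ax xb by (simp add: field_simps)
  also have "\<dots> \<le> (\<beta> - \<alpha>) * (\<omega> * (1 + q))" using Ex ax xb by simp
  finally show ?thesis unfolding q_def .
qed


lemma core:
  fixes g :: "real \<Rightarrow> real" and p t :: "nat \<Rightarrow> real" and I :: "nat set"
  assumes cont: "continuous_on {0..1} g" and hpos: "h > 0" and w0: "\<omega> \<ge> 0"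
    and hyp: "\<And>z s. 0 \<le> z - s \<Longrightarrow> z + s \<le> 1 \<Longrightarrow> 0 \<le> s \<Longrightarrow> s \<le> h \<Longrightarrow> g (z - s) - 2 * g z + g (z + s) \<le> \<omega>"
    and fin: "finite I" and pnn: "\<And>i. i \<in> I \<Longrightarrow> p i \<ge> 0"
    and tin: "\<And>i. i \<in> I \<Longrightarrow> 0 \<le> t i \<and> t i \<le> 1"
    and s1: "sum p I = 1" and s2: "(\<Sum>i\<in>I. p i * (t i - x)) = 0"
    and s3: "(\<Sum>i\<in>I. p i * (t i - x)^2) = h^2" and ex: "\<exists>i\<in>I. t i > x"
  shows "(\<Sum>i\<in>I. p i * g (t i)) - g x \<le> 3/2 * \<omega>"
proof -
  define D where "D i = g (t i) - g x - \<omega> * (1 + (t i - x)^2 / (2 * h^2))" for i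
  define R where "R = {i\<in>I. t i > x}"
  define l where "l = Max ((\<lambda>i. D i / (t i - x)) ` R)"
  have Rfin: "finite R" using fin unfolding R_def by auto
  have Rne: "R \<noteq> {}" using ex unfolding R_def by auto
  have Dle: "D i \<le> l * (t i - x)" if iI: "i \<in> I" for i
  proof -
    consider "t i > x" | "t i = x" | "t i < x" by linarith
    then show ?thesis
    proof cases
      case 1
      then have "i \<in> R" using iI unfolding R_def by auto
      then have "D i / (t i - x) \<le> l" unfolding l_def using Rfin by (intro Max_ge) auto
      then have "D i / (t i - x) * (t i - x) \<le> l * (t i - x)" using 1 by (intro mult_right_mono) auto
      then show ?thesis using 1 by simp
    next
      case 2
      then show ?thesis unfolding D_def using w0 by simp
    next
      case 3
      have "l \<in> (\<lambda>i. D i / (t i - x)) ` R" unfolding l_def using Rfin Rne by (intro Max_in) auto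
      then obtain j where jR: "j \<in> R" and lj: "l = D j / (t j - x)" by auto
      have tj: "t j > x" "j \<in> I" using jR unfolding R_def by auto
      define u where "u = t j - x"
      define v where "v = x - t i"
      have u0: "u > 0" and v0: "v > 0" using tj 3 unfolding u_def v_def by auto
      have ch: "(t j - x) * g (t i) + (x - t i) * g (t j) - (t j - t i) * g x
          \<le> (t j - t i) * (\<omega> * (1 + (x - t i) * (t j - x) / (2 * h^2)))"
        using chord[OF cont _ 3 tj(1) _ hpos w0 hyp] tin[OF iI] tin[OF tj(2)] by auto
      have eq: "u * D i + v * D j = ((t j - x) * g (t i) + (x - t i) * g (t j) - (t j - t i) * g x)
          - (t j - t i) * (\<omega> * (1 + (x - t i) * (t j - x) / (2 * h^2)))"
        unfolding D_def u_def v_def using hpos by (simp add: field_simps power2_eq_square)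
      have "u * D i + v * D j \<le> 0" using eq ch by linarith
      then have "D i \<le> - v * D j / u" using u0 by (simp add: field_simps)
      also have "\<dots> = l * (t i - x)" unfolding lj u_def v_def by (simp add: field_simps)
      finally show ?thesis .
    qed
  qed
  have decomp: "(\<Sum>i\<in>I. p i * g (t i)) = (\<Sum>i\<in>I. p i * D i) + (g x + \<omega>) * sum p I
      + \<omega> / (2 * h^2) * (\<Sum>i\<in>I. p i * (t i - x)^2)"
    unfolding D_def
    by (simp add: sum_distrib_left sum.distrib[symmetric] algebra_simps sum_divide_distrib)
  have "(\<Sum>i\<in>I. p i * D i) \<le> (\<Sum>i\<in>I. l * (p i * (t i - x)))"
  proof (intro sum_mono)
    fix i assume "i \<in> I"
    then have "p i * D i \<le> p i * (l * (t i - x))" using Dle pnn by (intro mult_left_mono) auto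
    then show "p i * D i \<le> l * (p i * (t i - x))" by (simp add: algebra_simps)
  qed
  also have "\<dots> = 0" using s2 by (simp add: sum_distrib_left[symmetric])
  finally have "(\<Sum>i\<in>I. p i * D i) \<le> 0" .
  moreover have "\<omega> / (2 * h^2) * (\<Sum>i\<in>I. p i * (t i - x)^2) = \<omega> / 2" using s3 hpos by simp
  moreover have "(g x + \<omega>) * sum p I = g x + \<omega>" using s1 by simp
  ultimately show ?thesis using decomp by linarith
qed


lemma bern_form:
  assumes ab: "a < b"
  shows "bernstein_ab n a b f x = (\<Sum>i\<le>n. Bernstein n i ((x - a) / (b - a)) * f (a + real i * (b - a) / real n))"
  unfolding bernstein_ab_def atLeast0AtMost sum_distrib_left
proof (rule sum.cong[OF refl])
  fix i assume "i \<in> {..n}"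
  then have i: "i \<le> n" by simp
  have pw: "(b - a) ^ n = (b - a) ^ i * (b - a) ^ (n - i)"
    using i by (simp add: power_add[symmetric])
  have 1: "1 - (x - a) / (b - a) = (b - x) / (b - a)" using ab by (simp add: field_simps)
  show "1 / (b - a) ^ n * (real (n choose i) * (x - a) ^ i * (b - x) ^ (n - i) * f (a + real i * (b - a) / real n)) =
        Bernstein n i ((x - a) / (b - a)) * f (a + real i * (b - a) / real n)"
    unfolding Bernstein_def 1 pw using ab by (simp add: power_divide field_simps)
qed

lemma mom:
  assumes n: "n \<ge> 1"
  shows "(\<Sum>i\<le>n. Bernstein n i y * (c * (real i / real n - y))) = 0"
    and "(\<Sum>i\<le>n. Bernstein n i y * (c * (real i / real n - y))^2) = c^2 * y * (1 - y) / real n"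
proof -
  have S0: "(\<Sum>i\<le>n. Bernstein n i y) = 1" by simp
  have S1: "(\<Sum>i\<le>n. real i * Bernstein n i y) = real n * y" by simp
  have S2: "(\<Sum>i\<le>n. real i * (real i - 1) * Bernstein n i y) = real n * (real n - 1) * y^2" by simp
  have "(\<Sum>i\<le>n. Bernstein n i y * (c * (real i / real n - y)))
      = c / real n * (\<Sum>i\<le>n. real i * Bernstein n i y) - c * y * (\<Sum>i\<le>n. Bernstein n i y)"
  proof -
    have "(\<Sum>i\<le>n. Bernstein n i y * (c * (real i / real n - y)))
       = (\<Sum>i\<le>n. c / real n * (real i * Bernstein n i y) - c * y * Bernstein n i y)"
      by (intro sum.cong refl) (simp add: algebra_simps)
    then show ?thesis by (simp only: sum_subtractf sum_distrib_left)
  qed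
  also have "\<dots> = 0" using S0 S1 n by simp
  finally show "(\<Sum>i\<le>n. Bernstein n i y * (c * (real i / real n - y))) = 0" .
  have "(\<Sum>i\<le>n. Bernstein n i y * (c * (real i / real n - y))^2)
      = (\<Sum>i\<le>n. (c^2 / real n ^ 2) * (real i * (real i - 1) * Bernstein n i y)
           + (c^2 / real n ^ 2 - 2 * c^2 * y / real n) * (real i * Bernstein n i y)
           + (c^2 * y^2) * Bernstein n i y)"
    using n by (intro sum.cong refl) (simp add: field_simps power2_eq_square)
  also have "\<dots> = (c^2 / real n ^ 2) * (real n * (real n - 1) * y^2)
       + (c^2 / real n ^ 2 - 2 * c^2 * y / real n) * (real n * y) + (c^2 * y^2) * 1"
    unfolding sum.distrib sum_distrib_left[symmetric] S0 S1 S2 by simp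
  also have "\<dots> = c^2 * y * (1 - y) / real n" using n by (simp add: field_simps power2_eq_square)
  finally show "(\<Sum>i\<le>n. Bernstein n i y * (c * (real i / real n - y))^2) = c^2 * y * (1 - y) / real n" .
qed

definition oset where "oset f \<delta> = {\<bar>f (x - h) - 2 * f x + f (x + h)\<bar> | x h.
      x - h \<in> {0..1} \<and> x + h \<in> {0..1} \<and> \<bar>h\<bar> \<le> \<delta>}"

lemma omega_le:
  assumes cont: "continuous_on {0..1} f" and "0 \<le> z - s" "z + s \<le> 1" "\<bar>s\<bar> \<le> \<delta>" "0 \<le> s"
  shows "\<bar>f (z - s) - 2 * f z + f (z + s)\<bar> \<le> omega2 f \<delta>"
proof -
  have "compact (f ` {0..1})" by (intro compact_continuous_image cont) simp
  then obtain B where B: "\<And>t. t \<in> {0..1} \<Longrightarrow> \<bar>f t\<bar> \<le> B"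
    using compact_imp_bounded bounded_iff by (metis image_eqI real_norm_def)
  have bdd: "bdd_above (oset f \<delta>)"
  proof (rule bdd_aboveI[of _ "4 * B"])
    fix w assume "w \<in> oset f \<delta>"
    then obtain x h where w: "w = \<bar>f (x - h) - 2 * f x + f (x + h)\<bar>" and
      xh: "x - h \<in> {0..1}" "x + h \<in> {0..1}" unfolding oset_def by blast
    have "x \<in> {0..1}" using xh by auto
    then show "w \<le> 4 * B" using B[of x] B[OF xh(1)] B[OF xh(2)] w by linarith
  qed
  have "\<bar>f (z - s) - 2 * f z + f (z + s)\<bar> \<in> oset f \<delta>" 
  proof -
    have "z - s \<in> {0..1}" "z + s \<in> {0..1}" "\<bar>s\<bar> \<le> \<delta>" using assms by auto
    then show ?thesis unfolding oset_def by blast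
  qed
  then show ?thesis unfolding omega2_def oset_def[symmetric] using bdd by (rule cSup_upper)
qed

lemma bern_a: assumes "a < b" "n \<ge> 1" shows "bernstein_ab n a b f a = f a"
proof -
  obtain m where n: "n = Suc m" using assms(2) by (cases n) auto
  show ?thesis unfolding bern_form[OF assms(1)] n sum.atMost_Suc_shift
    by (simp add: Bernstein_def)
qed

lemma bern_b: assumes "a < b" "n \<ge> 1" shows "bernstein_ab n a b f b = f b"
proof -
  obtain m where n: "n = Suc m" using assms(2) by (cases n) auto
  have "(\<Sum>i\<le>m. Bernstein (Suc m) i ((b - a) / (b - a)) * f (a + real i * (b - a) / real (Suc m))) = 0"
    using assms(1) by (intro sum.neutral) (auto simp: Bernstein_def Suc_diff_le)
  then show ?thesis unfolding bern_form[OF assms(1)] n sum.atMost_Suc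
    using assms(1) by (simp add: Bernstein_def)
qed


lemma interior:
  fixes f :: "real \<Rightarrow> real"
  assumes cont: "continuous_on {0..1} f" and n: "n \<ge> 1" and a0: "0 \<le> a" and ax: "a < x" and xb: "x < b" and b1: "b \<le> 1"
  shows "\<bar>bernstein_ab n a b f x - f x\<bar> \<le> 3 / 2 * omega2 f (sqrt ((x - a) * (b - x) / real n))"
proof -
  define \<delta> where "\<delta> = sqrt ((x - a) * (b - x) / real n)"
  define \<omega> where "\<omega> = omega2 f \<delta>"
  define y where "y = (x - a) / (b - a)"
  define p where "p i = Bernstein n i y" for i
  define t where "t i = a + real i * (b - a) / real n" for i
  have ab: "a < b" using ax xb by simp
  have npos: "real n > 0" using n by simp
  have var: "(x - a) * (b - x) / real n > 0" using ax xb npos by simp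
  have hpos: "\<delta> > 0" unfolding \<delta>_def using var by simp
  have h2: "\<delta>^2 = (x - a) * (b - x) / real n" unfolding \<delta>_def using var by simp
  have w0: "\<omega> \<ge> 0" unfolding \<omega>_def using omega_le[OF cont, of 0 0 \<delta>] hpos by simp
  have y01: "0 \<le> y" "y \<le> 1" unfolding y_def using ax xb by auto
  have xy: "x = a + (b - a) * y" unfolding y_def using ab by simp
  have tx: "t i - x = (b - a) * (real i / real n - y)" for i
    unfolding t_def xy by (simp add: field_simps)
  have pnn: "\<And>i. i \<in> {..n} \<Longrightarrow> p i \<ge> 0" unfolding p_def using y01 by (simp add: Bernstein_nonneg)
  have tin: "0 \<le> t i \<and> t i \<le> 1" if "i \<in> {..n}" for i
  proof -
    have "real i * (b - a) / real n \<le> b - a"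
    proof -
      have "real i * (b - a) \<le> real n * (b - a)" using that ab by (intro mult_right_mono) auto
      then show ?thesis using npos by (simp add: field_simps)
    qed
    moreover have "0 \<le> real i * (b - a) / real n" using ab by simp
    ultimately show ?thesis unfolding t_def using a0 b1 by auto
  qed
  have s1: "sum p {..n} = 1" unfolding p_def by simp
  have s2: "(\<Sum>i\<in>{..n}. p i * (t i - x)) = 0" unfolding p_def tx using mom(1)[OF n] by simp
  have s3: "(\<Sum>i\<in>{..n}. p i * (t i - x)^2) = \<delta>^2" unfolding p_def tx h2 mom(2)[OF n]
    unfolding xy using ab by (simp add: field_simps power2_eq_square)
  have ex: "\<exists>i\<in>{..n}. t i > x" using xb npos by (intro bexI[of _ n]) (auto simp: t_def)
  have B: "bernstein_ab n a b f x = (\<Sum>i\<in>{..n}. p i * f (t i))"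
    unfolding bern_form[OF ab] p_def t_def y_def by simp
  have hyp1: "f (z - s) - 2 * f z + f (z + s) \<le> \<omega>"
    if "0 \<le> z - s" "z + s \<le> 1" "0 \<le> s" "s \<le> \<delta>" for z s
    using omega_le[OF cont that(1,2) _ that(3), of \<delta>] that unfolding \<omega>_def by simp
  have hyp2: "(\<lambda>u. - f u) (z - s) - 2 * (\<lambda>u. - f u) z + (\<lambda>u. - f u) (z + s) \<le> \<omega>"
    if "0 \<le> z - s" "z + s \<le> 1" "0 \<le> s" "s \<le> \<delta>" for z s
    using omega_le[OF cont that(1,2) _ that(3), of \<delta>] that unfolding \<omega>_def by simp
  have cont2: "continuous_on {0..1} (\<lambda>u. - f u)" using cont by (intro continuous_intros)
  have c1: "(\<Sum>i\<in>{..n}. p i * f (t i)) - f x \<le> 3/2 * \<omega>"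
    by (rule core[OF cont hpos w0 hyp1 _ pnn tin s1 s2 s3 ex]) auto
  have c2: "(\<Sum>i\<in>{..n}. p i * (\<lambda>u. - f u) (t i)) - (\<lambda>u. - f u) x \<le> 3/2 * \<omega>"
    by (rule core[OF cont2 hpos w0 hyp2 _ pnn tin s1 s2 s3 ex]) auto
  have "(\<Sum>i\<in>{..n}. p i * (\<lambda>u. - f u) (t i)) = - (\<Sum>i\<in>{..n}. p i * f (t i))"
    by (simp add: sum_negf[symmetric])
  then have "(\<Sum>i\<in>{..n}. p i * f (t i)) - f x \<le> 3/2 * \<omega> \<and> -((\<Sum>i\<in>{..n}. p i * f (t i)) - f x) \<le> 3/2 * \<omega>"
    using c1 c2 by linarith
  then show ?thesis unfolding B abs_le_iff \<omega>_def[symmetric] \<delta>_def[symmetric] by linarith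
qed

theorem mainTheorem1:
  fixes n m k :: nat and f :: "real \<Rightarrow> real" and x :: real
  assumes "n \<ge> 1" and "m \<ge> 1"
    and "continuous_on {0..1} f"
    and "1 \<le> k" and "k \<le> m"
    and "(real k - 1) / real m \<le> x" and "x \<le> real k / real m"
  shows "\<bar>bernstein_comp n m f x - f x\<bar>
         \<le> 3 / 2 * omega2 f (sqrt ((x - (real k - 1) / real m) * (real k / real m - x) / real n))"
proof -
  define a where "a = (real k - 1) / real m"
  define b where "b = real k / real m"
  have mpos: "real m > 0" using assms by simp
  have ab: "a < b" unfolding a_def b_def using mpos by (simp add: divide_strict_right_mono)
  have a0: "0 \<le> a" unfolding a_def using assms by simp
  have b1: "b \<le> 1" unfolding b_def using assms mpos by simp
  have ax: "a \<le> x" and xb: "x \<le> b" using assms unfolding a_def b_def by auto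
  have w0: "0 \<le> 3 / 2 * omega2 f (sqrt ((x - a) * (b - x) / real n))"
    using omega_le[OF assms(3), of 0 0] ax xb by simp
  consider "x = a" | "x = b" | "a < x \<and> x < b" using ax xb by linarith
  then show ?thesis
  proof cases
    case 1
    have mx: "real m * x = real k - 1" using 1 mpos unfolding a_def by simp
    have "bernstein_comp n m f x = f x"
    proof (cases "k = 1")
      case True
      then have "real m * x = 0" using mx by simp
      then have "max 1 (nat \<lceil>real m * x\<rceil>) = k" using True by (simp only: ceiling_zero)
      then show ?thesis unfolding bernstein_comp_def bernstein_piece_def a_def[symmetric] b_def[symmetric]
        using bern_a[OF ab assms(1)] 1 by (simp add: a_def b_def)
    next
      case False
      then have k2: "k \<ge> 2" using assms by simp
      have "nat \<lceil>real m * x\<rceil> = k - 1" using mx k2 by (simp add: of_nat_diff)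
      then have kk: "max 1 (nat \<lceil>real m * x\<rceil>) = k - 1" using k2 by simp
      have ab2: "(real (k - 1) - 1) / real m < real (k - 1) / real m"
        using mpos by (simp add: divide_strict_right_mono)
      have "real (k - 1) / real m = x" using 1 k2 unfolding a_def by (simp add: of_nat_diff)
      then show ?thesis unfolding bernstein_comp_def bernstein_piece_def kk
        using bern_b[OF ab2 assms(1), of f] by simp
    qed
    then show ?thesis using w0 by (simp add: a_def b_def)
  next
    case 2
    have mx: "real m * x = real k" using 2 mpos unfolding b_def by simp
    then have "max 1 (nat \<lceil>real m * x\<rceil>) = k" using assms by simp
    then have "bernstein_comp n m f x = f x"
      unfolding bernstein_comp_def bernstein_piece_def a_def[symmetric] b_def[symmetric]
      using bern_b[OF ab assms(1)] 2 by (simp add: a_def b_def)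
    then show ?thesis using w0 by (simp add: a_def b_def)
  next
    case 3
    have "real m * x > real k - 1" "real m * x \<le> real k"
      using 3 mpos unfolding a_def b_def by (auto simp: field_simps)
    then have "\<lceil>real m * x\<rceil> = int k" by (intro ceiling_unique) auto
    then have "max 1 (nat \<lceil>real m * x\<rceil>) = k" using assms by simp
    then have "bernstein_comp n m f x = bernstein_ab n a b f x"
      unfolding bernstein_comp_def bernstein_piece_def a_def b_def by simp
    then show ?thesis using interior[OF assms(3,1) a0, of x b] 3 b1 by (simp add: a_def b_def)
  qed
qed

end
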